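(* Let $q$ be a positive rational number and let $M_q$ be the exponentially cyclic Puiseux monoid parametrized by $q$. If the monoid algebra $\mathbb{Z}[M_q]$ is atomic, then the monoid algebra $\mathbb{Q}[M_q]$ is atomic.
   Context: For a positive rational $q$, $M_q := \langle q^n : n \in \mathbb{N}_0 \rangle$ is the additive submonoid of $(\mathbb{Q}_{\geq 0},+)$ generated by the powers of $q$. For a commutative ring $R$, $R[M_q]$ denotes the monoid algebra: finite expressions $\sum_i r_i x^{m_i}$ with $r_i \in R$ and $m_i \in M_q$, with multiplication determined by $x^a x^b = x^{a+b}$. An integral domain is atomic if every nonzero nonunit is a finite product of irreducible elements. *)

theory Defs
  imports Complex_Main "HOL-Library.Poly_Mapping"
begin

inductive_set puiseux_exp_monoid :: "rat \<Rightarrow> rat set" for q :: rat where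
  zero: "0 \<in> puiseux_exp_monoid q"
| gen: "q ^ n \<in> puiseux_exp_monoid q"
| add: "a \<in> puiseux_exp_monoid q \<Longrightarrow> b \<in> puiseux_exp_monoid q \<Longrightarrow>
        a + b \<in> puiseux_exp_monoid q"

text \<open>The monoid algebra R[M] for a submonoid M of (Q,+), realised as the subring of the
  group algebra R[Q] = (rat =>_0 R) (finitely supported functions, convolution product)
  consisting of the elements whose support lies in M. The monomial x^m is
  Poly_Mapping.single m 1.\<close>
definition monoid_algebra :: "rat set \<Rightarrow> (rat \<Rightarrow>\<^sub>0 'r::comm_ring_1) set" where
  "monoid_algebra M = {f. Poly_Mapping.keys f \<subseteq> M}"

definition unit_in :: "'a::comm_ring_1 set \<Rightarrow> 'a \<Rightarrow> bool" where
  "unit_in S x \<longleftrightarrow> x \<in> S \<and> (\<exists>y\<in>S. x * y = 1)"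

definition irreducible_in :: "'a::comm_ring_1 set \<Rightarrow> 'a \<Rightarrow> bool" where
  "irreducible_in S x \<longleftrightarrow> x \<in> S \<and> x \<noteq> 0 \<and> \<not> unit_in S x \<and>
     (\<forall>a\<in>S. \<forall>b\<in>S. x = a * b \<longrightarrow> unit_in S a \<or> unit_in S b)"

definition atomic_in :: "'a::comm_ring_1 set \<Rightarrow> bool" where
  "atomic_in S \<longleftrightarrow> (\<forall>x\<in>S. x \<noteq> 0 \<and> \<not> unit_in S x \<longrightarrow>
     (\<exists>xs. xs \<noteq> [] \<and> (\<forall>a\<in>set xs. irreducible_in S a) \<and> prod_list xs = x))"

end

theory Submission
  imports Defs "HOL-Computational_Algebra.Primes"
begin

abbreviation lk where "lk \<equiv> Poly_Mapping.lookup"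
abbreviation ks where "ks \<equiv> Poly_Mapping.keys"

lemma lookup_mult_rat:
  fixes f g :: "rat \<Rightarrow>\<^sub>0 'b::comm_semiring_1"
  shows "lk (f * g) k = (\<Sum>l\<in>ks f. lk f l * lk g (k - l))"
proof -
  have inner: "(\<Sum>q::rat. (lk g q when k = l + q)) = lk g (k - l)" for l :: rat
  proof -
    have "(\<lambda>q::rat. (lk g q when k = l + q)) = (\<lambda>q. (lk g q when q = k - l))"
      by (auto simp: when_def fun_eq_iff)
    then show ?thesis by (metis Sum_any_when_equal)
  qed
  have "lk (f * g) k = (\<Sum>l::rat. lk f l * lk g (k - l))"
    by (simp add: lookup_mult inner)
  also have "\<dots> = (\<Sum>l\<in>ks f. lk f l * lk g (k - l))"
    by (rule Sum_any.expand_superset) (auto simp: in_keys_iff)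
  finally show ?thesis .
qed

lemma lookup_single0_mult:
  fixes f :: "rat \<Rightarrow>\<^sub>0 'b::comm_semiring_1"
  shows "lk (Poly_Mapping.single 0 c * f) k = c * lk f k"
  by (simp add: lookup_mult_rat lookup_single when_def)

lemma keys_single0_mult:
  fixes f :: "rat \<Rightarrow>\<^sub>0 'b::idom"
  assumes "c \<noteq> 0"
  shows "ks (Poly_Mapping.single 0 c * f) = ks f"
  using assms by (auto simp: in_keys_iff lookup_single0_mult)

lemma lookup_mult_unique:
  fixes f g :: "rat \<Rightarrow>\<^sub>0 'b::comm_semiring_1"
  assumes "\<And>a' b'. a' \<in> ks f \<Longrightarrow> b' \<in> ks g \<Longrightarrow> a' + b' = a + b \<Longrightarrow> a' = a"
  shows "lk (f * g) (a + b) = lk f a * lk g b"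
proof -
  have "lk (f * g) (a + b) = (\<Sum>l\<in>ks f. if l = a then lk f a * lk g b else 0)"
    unfolding lookup_mult_rat
  proof (rule sum.cong)
    fix l assume l: "l \<in> ks f"
    show "lk f l * lk g (a + b - l) = (if l = a then lk f a * lk g b else 0)"
    proof (cases "l = a")
      case False
      then have "a + b - l \<notin> ks g" using assms[of l "a + b - l"] l by auto
      then show ?thesis using False by (simp add: in_keys_iff)
    qed simp
  qed simp
  also have "\<dots> = lk f a * lk g b"
    by (simp add: in_keys_iff)
  finally show ?thesis .
qed

definition E :: "(rat \<Rightarrow>\<^sub>0 int) \<Rightarrow> (rat \<Rightarrow>\<^sub>0 rat)" where
  "E f = Poly_Mapping.map of_int f"

lemma lookup_E: "lk (E f) k = of_int (lk f k)"
  by (simp add: E_def map.rep_eq when_def)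

lemma keys_E: "ks (E f) = ks f"
  by (auto simp: in_keys_iff lookup_E)

lemma E_mult: "E (f * g) = E f * E g"
  by (rule poly_mapping_eqI) (simp add: lookup_E lookup_mult_rat keys_E)

lemma E_single: "E (Poly_Mapping.single k c) = Poly_Mapping.single k (of_int c)"
  by (rule poly_mapping_eqI) (simp add: lookup_E lookup_single when_def)

lemma E_one: "E 1 = 1"
  using E_single[of 0 1] by simp

lemma E_inj: "E f = E g \<Longrightarrow> f = g"
  by (rule poly_mapping_eqI) (metis lookup_E of_int_eq_iff)

lemma E_prod_list: "E (prod_list xs) = prod_list (map E xs)"
  by (induction xs) (simp_all add: E_one E_mult)


lemma keys_const_eq:
  fixes x :: "rat \<Rightarrow>\<^sub>0 'b::zero"
  assumes "ks x \<subseteq> {0}"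
  shows "x = Poly_Mapping.single 0 (lk x 0)"
proof (rule poly_mapping_eqI)
  fix k show "lk x k = lk (Poly_Mapping.single 0 (lk x 0)) k"
    using assms by (cases "k = 0") (auto simp: lookup_single in_keys_iff)
qed

lemma MA_mult:
  assumes add: "\<And>a b. a \<in> M \<Longrightarrow> b \<in> M \<Longrightarrow> a + b \<in> M"
  assumes "x \<in> monoid_algebra M" "y \<in> monoid_algebra M"
  shows "x * y \<in> monoid_algebra M"
  using assms keys_mult[of x y] unfolding monoid_algebra_def by blast

lemma MA_single0:
  assumes "0 \<in> M"
  shows "Poly_Mapping.single 0 c \<in> monoid_algebra M"
  using assms unfolding monoid_algebra_def by simp

lemma MA_single0_mult:
  assumes add: "\<And>a b. a \<in> M \<Longrightarrow> b \<in> M \<Longrightarrow> a + b \<in> M" and "0 \<in> M"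
  assumes "x \<in> monoid_algebra M"
  shows "Poly_Mapping.single 0 c * x \<in> monoid_algebra M"
  using assms MA_mult MA_single0 by blast

lemma unit_char:
  fixes x :: "rat \<Rightarrow>\<^sub>0 rat"
  assumes add: "\<And>a b. a \<in> M \<Longrightarrow> b \<in> M \<Longrightarrow> a + b \<in> M" and zero: "0 \<in> M"
    and nonneg: "\<And>a. a \<in> M \<Longrightarrow> a \<ge> 0"
  shows "unit_in (monoid_algebra M) x \<longleftrightarrow> x \<in> monoid_algebra M \<and> x \<noteq> 0 \<and> ks x \<subseteq> {0}"
proof
  assume "unit_in (monoid_algebra M) x"
  then obtain y where x: "x \<in> monoid_algebra M" and y: "y \<in> monoid_algebra M" and xy: "x * y = 1"
    unfolding unit_in_def by blast
  have "x \<noteq> 0" "y \<noteq> 0" using xy by auto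
  then have ne: "ks x \<noteq> {}" "ks y \<noteq> {}" by auto
  have kx: "\<And>k. k \<in> ks x \<Longrightarrow> k \<ge> 0" using x nonneg unfolding monoid_algebra_def by blast
  have ky: "\<And>k. k \<in> ks y \<Longrightarrow> k \<ge> 0" using y nonneg unfolding monoid_algebra_def by blast
  define a where "a = Min (ks x)"
  define b where "b = Min (ks y)"
  have a: "a \<in> ks x" "\<And>k. k \<in> ks x \<Longrightarrow> a \<le> k" using ne by (auto simp: a_def)
  have b: "b \<in> ks y" "\<And>k. k \<in> ks y \<Longrightarrow> b \<le> k" using ne by (auto simp: b_def)
  have "lk (x * y) (a + b) = lk x a * lk y b"
    by (rule lookup_mult_unique) (use a b in force)
  also have "\<dots> \<noteq> 0" using a b by (simp add: in_keys_iff)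
  finally have "a + b = 0" using xy by (simp add: lookup_one when_def split: if_splits)
  then have a0: "a = 0" using kx[OF a(1)] ky[OF b(1)] by linarith
  define A where "A = Max (ks x)"
  define B where "B = Max (ks y)"
  have A: "A \<in> ks x" "\<And>k. k \<in> ks x \<Longrightarrow> k \<le> A" using ne by (auto simp: A_def)
  have B: "B \<in> ks y" "\<And>k. k \<in> ks y \<Longrightarrow> k \<le> B" using ne by (auto simp: B_def)
  have "lk (x * y) (A + B) = lk x A * lk y B"
    by (rule lookup_mult_unique) (use A B in force)
  also have "\<dots> \<noteq> 0" using A B by (simp add: in_keys_iff)
  finally have "A + B = 0" using xy by (simp add: lookup_one when_def split: if_splits)
  then have A0: "A = 0" using kx[OF A(1)] ky[OF B(1)] by linarith
  have "ks x \<subseteq> {0}" using a(2) A(2) a0 A0 by force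
  then show "x \<in> monoid_algebra M \<and> x \<noteq> 0 \<and> ks x \<subseteq> {0}" using x \<open>x \<noteq> 0\<close> by blast
next
  assume H: "x \<in> monoid_algebra M \<and> x \<noteq> 0 \<and> ks x \<subseteq> {0}"
  then have xe: "x = Poly_Mapping.single 0 (lk x 0)" using keys_const_eq by blast
  have c: "lk x 0 \<noteq> 0" using H xe by (metis single_zero)
  have "x * Poly_Mapping.single 0 (1 / lk x 0) = 1"
    by (subst xe) (simp add: mult_single c)
  then show "unit_in (monoid_algebra M) x"
    unfolding unit_in_def using H MA_single0[OF zero] by blast
qed

definition prim :: "(rat \<Rightarrow>\<^sub>0 int) \<Rightarrow> bool" where
  "prim A \<longleftrightarrow> (\<forall>p. prime p \<longrightarrow> \<not> (\<forall>k. p dvd lk A k))"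

lemma dvd_all_mult:
  fixes A B :: "rat \<Rightarrow>\<^sub>0 int"
  assumes "\<forall>k. p dvd lk A k"
  shows "p dvd lk (A * B) k"
  unfolding lookup_mult_rat using assms by (intro dvd_sum) simp

lemma gauss:
  fixes A B :: "rat \<Rightarrow>\<^sub>0 int"
  assumes "prim A" "prim B"
  shows "prim (A * B)"
  unfolding prim_def
proof (intro allI impI notI)
  fix p :: int assume p: "prime p" and dv: "\<forall>k. p dvd lk (A * B) k"
  define SA where "SA = {k \<in> ks A. \<not> p dvd lk A k}"
  define SB where "SB = {k \<in> ks B. \<not> p dvd lk B k}"
  have "SA \<noteq> {}" using assms(1) p unfolding prim_def SA_def by (auto simp: in_keys_iff) (metis dvd_0_right)
  moreover have "SB \<noteq> {}" using assms(2) p unfolding prim_def SB_def by (auto simp: in_keys_iff) (metis dvd_0_right)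
  moreover have "finite SA" "finite SB" by (auto simp: SA_def SB_def)
  ultimately have i: "Min SA \<in> SA" and j: "Min SB \<in> SB"
    and im: "\<And>k. k \<in> SA \<Longrightarrow> Min SA \<le> k" and jm: "\<And>k. k \<in> SB \<Longrightarrow> Min SB \<le> k" by auto
  define i where "i = Min SA"
  define j where "j = Min SB"
  have lowA: "p dvd lk A l" if "l < i" for l
  proof (cases "l \<in> ks A")
    case True show ?thesis
    proof (rule ccontr)
      assume "\<not> p dvd lk A l"
      then have "l \<in> SA" using True by (simp add: SA_def)
      then have "i \<le> l" using im unfolding i_def by blast
      then show False using that by simp
    qed
  qed (simp add: in_keys_iff)
  have lowB: "p dvd lk B l" if "l < j" for l
  proof (cases "l \<in> ks B")
    case True show ?thesis
    proof (rule ccontr)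
      assume "\<not> p dvd lk B l"
      then have "l \<in> SB" using True by (simp add: SB_def)
      then have "j \<le> l" using jm unfolding j_def by blast
      then show False using that by simp
    qed
  qed (simp add: in_keys_iff)
  have iA: "i \<in> ks A" using i unfolding i_def SA_def by auto
  have "lk (A * B) (i + j) = (\<Sum>l\<in>ks A. if l = i then lk A l * lk B (i + j - l) else 0)
      + (\<Sum>l\<in>ks A. if l = i then 0 else lk A l * lk B (i + j - l))"
    unfolding lookup_mult_rat sum.distrib[symmetric] by (rule sum.cong) simp_all
  also have "(\<Sum>l\<in>ks A. if l = i then lk A l * lk B (i + j - l) else 0) = lk A i * lk B j"
    using iA by simp
  finally have eq: "lk (A * B) (i + j) = lk A i * lk B j + (\<Sum>l\<in>ks A. if l = i then 0 else lk A l * lk B (i + j - l))" .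
  have "p dvd (\<Sum>l\<in>ks A. if l = i then 0 else lk A l * lk B (i + j - l))"
  proof (intro dvd_sum)
    fix l assume "l \<in> ks A"
    show "p dvd (if l = i then 0 else lk A l * lk B (i + j - l))"
    proof (cases "l < i")
      case True then show ?thesis using lowA[OF True] by auto
    next
      case False
      show ?thesis
      proof (cases "l = i")
        case False': False
        with \<open>\<not> l < i\<close> have "i + j - l < j" by simp
        then show ?thesis using lowB by auto
      qed simp
    qed
  qed
  then have "p dvd lk A i * lk B j" using dv[rule_format, of "i + j"] unfolding eq by (simp add: dvd_add_left_iff)
  then have "p dvd lk A i \<or> p dvd lk B j" using p by (simp add: prime_dvd_mult_iff)
  then show False using i j unfolding i_def j_def SA_def SB_def by auto
qed


lemma puiseux_props:
  fixes q :: rat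
  assumes "q > 0"
  shows "0 \<in> puiseux_exp_monoid q"
    and "\<And>a b. a \<in> puiseux_exp_monoid q \<Longrightarrow> b \<in> puiseux_exp_monoid q \<Longrightarrow> a + b \<in> puiseux_exp_monoid q"
    and "\<And>a. a \<in> puiseux_exp_monoid q \<Longrightarrow> a \<ge> 0"
proof -
  show "0 \<in> puiseux_exp_monoid q" by (rule puiseux_exp_monoid.zero)
  show "\<And>a b. a \<in> puiseux_exp_monoid q \<Longrightarrow> b \<in> puiseux_exp_monoid q \<Longrightarrow> a + b \<in> puiseux_exp_monoid q"
    by (rule puiseux_exp_monoid.add)
  fix a assume "a \<in> puiseux_exp_monoid q"
  then show "a \<ge> 0"
    by (induction rule: puiseux_exp_monoid.induct) (use assms in auto)
qed

lemma clear_denoms: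
  fixes a :: "rat \<Rightarrow>\<^sub>0 rat"
  shows "\<exists>d::int. d \<noteq> 0 \<and> (\<exists>F. E F = Poly_Mapping.single 0 (of_int d) * a)"
proof -
  define d where "d = (\<Prod>k\<in>ks a. snd (quotient_of (lk a k)))"
  have dpos: "d > 0" unfolding d_def by (rule prod_pos) (simp add: quotient_of_denom_pos')
  have int: "of_int d * lk a k \<in> \<int>" for k
  proof (cases "k \<in> ks a")
    case True
    obtain n m where nm: "quotient_of (lk a k) = (n, m)" by force
    have m0: "m > 0" using nm quotient_of_denom_pos by blast
    have "m dvd d" unfolding d_def using True nm by (metis dvd_prodI finite_keys snd_conv)
    then obtain e where e: "d = m * e" by blast
    have "of_int d * lk a k = of_int e * of_int n"
      using quotient_of_div[OF nm] e m0 by simp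
    then show ?thesis by simp
  qed (simp add: in_keys_iff)
  define F where "F = Poly_Mapping.map (\<lambda>r. \<lfloor>of_int d * r\<rfloor>) a"
  have "E F = Poly_Mapping.single 0 (of_int d) * a"
  proof (rule poly_mapping_eqI)
    fix k
    from int[of k] obtain z where z: "of_int d * lk a k = of_int z" by (metis Ints_cases)
    show "lk (E F) k = lk (Poly_Mapping.single 0 (of_int d) * a) k"
      unfolding lookup_E lookup_single0_mult F_def using z
      by (auto simp: map.rep_eq when_def)
  qed
  then show ?thesis using dpos by (intro exI[of _ d]) auto
qed

lemma prim_decomp:
  fixes F :: "rat \<Rightarrow>\<^sub>0 int"
  assumes "F \<noteq> 0"
  shows "\<exists>c G. c \<noteq> 0 \<and> prim G \<and> F = Poly_Mapping.single 0 c * G"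
proof -
  define c where "c = Gcd (lk F ` ks F)"
  obtain k0 where k0: "k0 \<in> ks F" using assms by (metis ex_in_conv keys_eq_empty)
  have c0: "c \<noteq> 0" using k0 unfolding c_def
    by (metis Gcd_0_iff imageI in_keys_iff singletonD subsetD)
  have cdvd: "c dvd lk F k" for k
  proof (cases "k \<in> ks F")
    case True then show ?thesis unfolding c_def by (simp add: Gcd_dvd)
  qed (simp add: in_keys_iff)
  define G where "G = Poly_Mapping.map (\<lambda>x. x div c) F"
  have lG: "lk G k = lk F k div c" for k by (simp add: G_def map.rep_eq when_def)
  have FG: "F = Poly_Mapping.single 0 c * G"
    by (rule poly_mapping_eqI) (simp add: lookup_single0_mult lG cdvd)
  have "prim G"
    unfolding prim_def
  proof (intro allI impI notI)
    fix p :: int assume p: "prime p" and dv: "\<forall>k. p dvd lk G k"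
    have "p * c dvd lk F k" for k
    proof -
      have "lk F k = c * lk G k" using FG by (metis lookup_single0_mult)
      then show ?thesis using dv by (simp add: mult.commute)
    qed
    then have "p * c dvd c" unfolding c_def by (intro Gcd_greatest) auto
    then have "p * c dvd 1 * c" by simp
    then have "p dvd 1" using dvd_times_right_cancel_iff[OF c0, of p 1] by blast
    then show False using p not_prime_unit by blast
  qed
  then show ?thesis using c0 FG by blast
qed

lemma int_no_prime_unit:
  fixes c :: int
  assumes "c \<noteq> 0" "\<And>p. prime p \<Longrightarrow> \<not> p dvd c"
  shows "c * c = 1"
proof -
  have "is_unit c" using prime_divisor_exists[OF assms(1)] assms(2) by blast
  then have "\<bar>c\<bar> = 1" by simp
  then show ?thesis by (metis abs_mult_self_eq mult_1_left)
qed

lemma prod_list_factor: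
  fixes xs :: "'a::comm_monoid_mult list"
  shows "x \<in> set xs \<Longrightarrow> \<exists>h. prod_list xs = x * h"
proof (induction xs)
  case (Cons y ys)
  show ?case
  proof (cases "x = y")
    case True then show ?thesis by auto
  next
    case False
    then obtain h where "prod_list ys = x * h" using Cons by auto
    then show ?thesis by (intro exI[of _ "y * h"]) (simp add: ac_simps)
  qed
qed simp


lemma E_zero: "E 0 = 0"
  by (rule poly_mapping_eqI) (simp add: lookup_E)

context
  fixes M :: "rat set"
  assumes M0: "0 \<in> M" and Madd: "\<And>a b. a \<in> M \<Longrightarrow> b \<in> M \<Longrightarrow> a + b \<in> M"
    and Mnn: "\<And>a. a \<in> M \<Longrightarrow> a \<ge> 0"
begin

lemma UC: "unit_in (monoid_algebra M) x \<longleftrightarrow> x \<in> monoid_algebra M \<and> x \<noteq> 0 \<and> ks x \<subseteq> {0}"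
  for x :: "rat \<Rightarrow>\<^sub>0 rat"
  by (rule unit_char[OF Madd M0 Mnn])

lemma E_MA: "y \<in> monoid_algebra M \<Longrightarrow> E y \<in> monoid_algebra M"
  by (simp add: monoid_algebra_def keys_E)

lemma Z_unit_keys:
  fixes y :: "rat \<Rightarrow>\<^sub>0 int"
  assumes "unit_in (monoid_algebra M) y"
  shows "y \<noteq> 0 \<and> ks y \<subseteq> {0}"
proof -
  obtain z where y: "y \<in> monoid_algebra M" and z: "z \<in> monoid_algebra M" and yz: "y * z = 1"
    using assms unfolding unit_in_def by blast
  have "E y * E z = 1" using yz by (metis E_mult E_one)
  then have "unit_in (monoid_algebra M) (E y)"
    unfolding unit_in_def using E_MA[OF y] E_MA[OF z] by blast
  then have "E y \<noteq> 0 \<and> ks (E y) \<subseteq> {0}" using UC by blast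
  then show ?thesis by (metis E_zero keys_E)
qed

lemma Q_decomp:
  fixes a :: "rat \<Rightarrow>\<^sub>0 rat"
  assumes a: "a \<in> monoid_algebra M" and a0: "a \<noteq> 0"
  shows "\<exists>\<alpha> A. \<alpha> \<noteq> 0 \<and> prim A \<and> A \<in> monoid_algebra M \<and> a = Poly_Mapping.single 0 \<alpha> * E A"
proof -
  obtain d F where d0: "d \<noteq> 0" and F: "E F = Poly_Mapping.single 0 (of_int d) * a"
    using clear_denoms by blast
  have "Poly_Mapping.single 0 (rat_of_int d) \<noteq> 0" using d0
    by (metis lookup_single_eq lookup_zero of_int_eq_0_iff)
  then have "E F \<noteq> 0" using F a0 by (metis mult_eq_0_iff)
  then have F0: "F \<noteq> 0" using E_zero by metis
  obtain c G where c0: "c \<noteq> 0" and pG: "prim G" and FG: "F = Poly_Mapping.single 0 c * G"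
    using prim_decomp[OF F0] by blast
  have "ks G = ks a"
    using keys_E[of F] F FG keys_single0_mult[OF c0, of G] keys_single0_mult[of "rat_of_int d" a] d0
    by simp
  then have GZ: "G \<in> monoid_algebra M" using a unfolding monoid_algebra_def by simp
  have eq: "Poly_Mapping.single 0 (of_int d) * a = Poly_Mapping.single 0 (of_int c) * E G"
    using F FG by (simp add: E_mult E_single)
  have "a = Poly_Mapping.single 0 (1 / of_int d) * (Poly_Mapping.single 0 (of_int d) * a)"
    using d0 by (simp add: mult.assoc[symmetric] mult_single del: single_of_int)
  also have "\<dots> = Poly_Mapping.single 0 (of_int c / of_int d) * E G"
    unfolding eq by (simp add: mult.assoc[symmetric] mult_single del: single_of_int)
  finally show ?thesis using c0 d0 pG GZ by (intro exI[of _ "of_int c / of_int d"] exI[of _ G]) simp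
qed


lemma E_irred:
  fixes g :: "rat \<Rightarrow>\<^sub>0 int"
  assumes irr: "irreducible_in (monoid_algebra M) g" and pg: "prim g"
  shows "irreducible_in (monoid_algebra M) (E g)"
proof -
  from irr have gZ: "g \<in> monoid_algebra M" and g0: "g \<noteq> 0"
    and gnu: "\<not> unit_in (monoid_algebra M) g"
    and fac: "\<And>a b. a \<in> monoid_algebra M \<Longrightarrow> b \<in> monoid_algebra M \<Longrightarrow> g = a * b \<Longrightarrow>
                unit_in (monoid_algebra M) a \<or> unit_in (monoid_algebra M) b"
    unfolding irreducible_in_def by auto
  have EgQ: "E g \<in> monoid_algebra M" using E_MA[OF gZ] .
  have Eg0: "E g \<noteq> 0" using g0 by (metis keys_E keys_eq_empty)
  have nu: "\<not> unit_in (monoid_algebra M) (E g)"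
  proof
    assume "unit_in (monoid_algebra M) (E g)"
    then have kg: "ks g \<subseteq> {0}" using UC keys_E by metis
    define c where "c = lk g 0"
    have ge: "g = Poly_Mapping.single 0 c" using keys_const_eq[OF kg] c_def by simp
    have c0: "c \<noteq> 0" using g0 ge by auto
    have "c * c = 1"
    proof (rule int_no_prime_unit[OF c0])
      fix p :: int assume p: "prime p" show "\<not> p dvd c"
      proof
        assume "p dvd c"
        then have "\<forall>k. p dvd lk g k" using ge by (simp add: lookup_single when_def)
        then show False using pg p unfolding prim_def by blast
      qed
    qed
    then have "g * g = 1" using ge by (simp add: mult_single)
    then have "unit_in (monoid_algebra M) g" using gZ unfolding unit_in_def by blast
    then show False using gnu by blast
  qed
  have "unit_in (monoid_algebra M) a \<or> unit_in (monoid_algebra M) b"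
    if a: "a \<in> monoid_algebra M" and b: "b \<in> monoid_algebra M" and ab: "E g = a * b"
    for a b :: "rat \<Rightarrow>\<^sub>0 rat"
  proof -
    have a0: "a \<noteq> 0" and b0: "b \<noteq> 0" using ab Eg0 by auto
    obtain \<alpha> A where al: "\<alpha> \<noteq> 0" "prim A" "A \<in> monoid_algebra M"
        "a = Poly_Mapping.single 0 \<alpha> * E A"
      using Q_decomp[OF a a0] by blast
    obtain \<beta> B where be: "\<beta> \<noteq> 0" "prim B" "B \<in> monoid_algebra M"
        "b = Poly_Mapping.single 0 \<beta> * E B"
      using Q_decomp[OF b b0] by blast
    define \<rho> where "\<rho> = \<alpha> * \<beta>"
    have \<rho>0: "\<rho> \<noteq> 0" using al be by (simp add: \<rho>_def)
    have "E g = (Poly_Mapping.single 0 \<alpha> * Poly_Mapping.single 0 \<beta>) * (E A * E B)"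
      using ab al(4) be(4) by (simp add: ac_simps)
    then have Eg: "E g = Poly_Mapping.single 0 \<rho> * E (A * B)"
      by (simp add: mult_single E_mult \<rho>_def)
    obtain r s where rs: "quotient_of \<rho> = (r, s)" by force
    have s0: "s > 0" using rs quotient_of_denom_pos by blast
    have cop: "coprime r s" using rs quotient_of_coprime by blast
    have \<rho>e: "\<rho> = of_int r / of_int s" using rs quotient_of_div by blast
    have r0: "r \<noteq> 0" using \<rho>0 \<rho>e by auto
    have sr: "of_int s * \<rho> = of_int r" using \<rho>e s0 by simp
    have "Poly_Mapping.single 0 (of_int s) * E g
        = Poly_Mapping.single 0 (of_int s * \<rho>) * E (A * B)"
      unfolding Eg by (simp add: mult.assoc[symmetric] mult_single del: single_of_int)
    also have "\<dots> = Poly_Mapping.single 0 (of_int r) * E (A * B)" by (simp only: sr)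
    finally have "E (Poly_Mapping.single 0 s * g) = E (Poly_Mapping.single 0 r * (A * B))"
      by (simp only: E_mult E_single)
    then have eq: "Poly_Mapping.single 0 s * g = Poly_Mapping.single 0 r * (A * B)" by (rule E_inj)
    have eqk: "s * lk g k = r * lk (A * B) k" for k
      using eq by (metis lookup_single0_mult)
    have pAB: "prim (A * B)" using gauss al(2) be(2) .
    have "s * s = 1"
    proof (rule int_no_prime_unit)
      show "s \<noteq> 0" using s0 by simp
      fix p :: int assume p: "prime p" show "\<not> p dvd s"
      proof
        assume ps: "p dvd s"
        have npr: "\<not> p dvd r" using cop ps p coprime_common_divisor not_prime_unit by blast
        have "p dvd lk (A * B) k" for k
        proof -
          have "p dvd r * lk (A * B) k" using eqk[of k] ps by (metis dvd_mult2)
          then show ?thesis using npr p by (simp add: prime_dvd_mult_iff)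
        qed
        then show False using pAB p unfolding prim_def by blast
      qed
    qed
    then have "s dvd 1" by (metis dvd_triv_left)
    then have s1: "s = 1" using s0 by simp
    have rr: "r * r = 1"
    proof (rule int_no_prime_unit[OF r0])
      fix p :: int assume p: "prime p" show "\<not> p dvd r"
      proof
        assume pr: "p dvd r"
        have nps: "\<not> p dvd s" using cop pr p coprime_common_divisor not_prime_unit by blast
        have "p dvd lk g k" for k
        proof -
          have "p dvd s * lk g k" using eqk[of k] pr by (metis dvd_mult2)
          then show ?thesis using nps p by (simp add: prime_dvd_mult_iff)
        qed
        then show False using pg p unfolding prim_def by blast
      qed
    qed
    have "g = (Poly_Mapping.single 0 r * A) * B"
      using eq s1 by (simp add: mult.assoc del: single_of_int)
    moreover have rA: "Poly_Mapping.single 0 r * A \<in> monoid_algebra M"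
      using MA_single0_mult[OF Madd M0 al(3)] .
    ultimately have "unit_in (monoid_algebra M) (Poly_Mapping.single 0 r * A) \<or> unit_in (monoid_algebra M) B"
      using fac be(3) by blast
    then show ?thesis
    proof
      assume "unit_in (monoid_algebra M) (Poly_Mapping.single 0 r * A)"
      then have "ks (Poly_Mapping.single 0 r * A) \<subseteq> {0}" using Z_unit_keys by blast
      then have "ks a \<subseteq> {0}" using keys_single0_mult[OF r0] keys_single0_mult[OF al(1)] al(4) keys_E
        by metis
      then show ?thesis using UC a a0 by blast
    next
      assume "unit_in (monoid_algebra M) B"
      then have "ks B \<subseteq> {0}" using Z_unit_keys by blast
      then have "ks b \<subseteq> {0}" using keys_single0_mult[OF be(1)] be(4) keys_E
        by metis
      then show ?thesis using UC b b0 by blast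
    qed
  qed
  then show ?thesis unfolding irreducible_in_def using EgQ Eg0 nu by blast
qed

lemma scale_irred:
  fixes y :: "rat \<Rightarrow>\<^sub>0 rat"
  assumes irr: "irreducible_in (monoid_algebra M) y" and u0: "u \<noteq> 0"
  shows "irreducible_in (monoid_algebra M) (Poly_Mapping.single 0 u * y)"
proof -
  from irr have yQ: "y \<in> monoid_algebra M" and y0: "y \<noteq> 0"
    and ynu: "\<not> unit_in (monoid_algebra M) y"
    and fac: "\<And>a b. a \<in> monoid_algebra M \<Longrightarrow> b \<in> monoid_algebra M \<Longrightarrow> y = a * b \<Longrightarrow>
                unit_in (monoid_algebra M) a \<or> unit_in (monoid_algebra M) b"
    unfolding irreducible_in_def by auto
  have k: "ks (Poly_Mapping.single 0 u * y) = ks y" using keys_single0_mult[OF u0] .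
  have mem: "Poly_Mapping.single 0 u * y \<in> monoid_algebra M"
    using MA_single0_mult[OF Madd M0 yQ] .
  have nz: "Poly_Mapping.single 0 u * y \<noteq> 0" using k y0 by (metis keys_eq_empty)
  have nu: "\<not> unit_in (monoid_algebra M) (Poly_Mapping.single 0 u * y)"
    using ynu UC k mem nz yQ y0 by metis
  have "unit_in (monoid_algebra M) a \<or> unit_in (monoid_algebra M) b"
    if a: "a \<in> monoid_algebra M" and b: "b \<in> monoid_algebra M" and ab: "Poly_Mapping.single 0 u * y = a * b"
    for a b
  proof -
    have "y = (Poly_Mapping.single 0 (1 / u) * a) * b"
    proof -
      have "y = Poly_Mapping.single 0 (1 / u) * (Poly_Mapping.single 0 u * y)"
        using u0 by (simp add: mult.assoc[symmetric] mult_single)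
      then show ?thesis unfolding ab by (simp add: mult.assoc)
    qed
    moreover have "Poly_Mapping.single 0 (1 / u) * a \<in> monoid_algebra M"
      using MA_single0_mult[OF Madd M0 a] .
    ultimately have "unit_in (monoid_algebra M) (Poly_Mapping.single 0 (1 / u) * a) \<or> unit_in (monoid_algebra M) b"
      using fac b by blast
    then show ?thesis
    proof
      assume H: "unit_in (monoid_algebra M) (Poly_Mapping.single 0 (1 / u) * a)"
      have "ks (Poly_Mapping.single 0 (1 / u) * a) = ks a" using u0 by (intro keys_single0_mult) simp
      then show ?thesis using H UC a by (metis mult_zero_right)
    qed simp
  qed
  then show ?thesis unfolding irreducible_in_def using mem nz nu by blast
qed

lemma main_atomic:
  assumes AZ: "atomic_in (monoid_algebra M :: (rat \<Rightarrow>\<^sub>0 int) set)"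
  shows "atomic_in (monoid_algebra M :: (rat \<Rightarrow>\<^sub>0 rat) set)"
  unfolding atomic_in_def
proof (intro ballI impI)
  fix f :: "rat \<Rightarrow>\<^sub>0 rat"
  assume fQ: "f \<in> monoid_algebra M" and H: "f \<noteq> 0 \<and> \<not> unit_in (monoid_algebra M) f"
  obtain u G where u0: "u \<noteq> 0" and pG: "prim G" and GZ: "G \<in> monoid_algebra M"
      and fG: "f = Poly_Mapping.single 0 u * E G"
    using Q_decomp[OF fQ] H by blast
  have kf: "ks f = ks G" using fG keys_single0_mult[OF u0] keys_E by metis
  have G0: "G \<noteq> 0" using H kf by (metis keys_eq_empty)
  have Gnu: "\<not> unit_in (monoid_algebra M) G"
  proof
    assume "unit_in (monoid_algebra M) G"
    then have "ks G \<subseteq> {0}" using Z_unit_keys by blast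
    then have "unit_in (monoid_algebra M) f" using UC fQ H kf by metis
    then show False using H by blast
  qed
  obtain gs where gs: "gs \<noteq> []" "\<forall>g\<in>set gs. irreducible_in (monoid_algebra M) g" "prod_list gs = G"
    using AZ GZ G0 Gnu unfolding atomic_in_def by blast
  have prims: "prim g" if g: "g \<in> set gs" for g
    unfolding prim_def
  proof (intro allI impI notI)
    fix p :: int assume p: "prime p" and dv: "\<forall>k. p dvd lk g k"
    obtain h where "G = g * h" using prod_list_factor[OF g] gs(3) by metis
    then have "\<forall>k. p dvd lk G k" using dvd_all_mult[OF dv] by simp
    then show False using pG p unfolding prim_def by blast
  qed
  have irrE: "irreducible_in (monoid_algebra M) (E g)" if "g \<in> set gs" for g
    using E_irred gs(2) prims that by blast
  obtain g1 rest where gs1: "gs = g1 # rest" using gs(1) by (cases gs) auto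
  define ys where "ys = (Poly_Mapping.single 0 u * E g1) # map E rest"
  have "ys \<noteq> []" by (simp add: ys_def)
  moreover have "\<forall>y\<in>set ys. irreducible_in (monoid_algebra M) y"
    using irrE scale_irred[OF irrE u0] gs1 by (auto simp: ys_def)
  moreover have "prod_list ys = f"
    using fG gs(3) gs1 E_prod_list[of rest] E_mult[of g1 "prod_list rest"] by (simp add: ys_def mult.assoc)
  ultimately show "\<exists>xs. xs \<noteq> [] \<and> (\<forall>a\<in>set xs. irreducible_in (monoid_algebra M) a) \<and> prod_list xs = f"
    by blast
qed

end

theorem proposition2p1:
  fixes q :: rat
  assumes "q > 0"
    and "atomic_in (monoid_algebra (puiseux_exp_monoid q) :: (rat \<Rightarrow>\<^sub>0 int) set)"
  shows "atomic_in (monoid_algebra (puiseux_exp_monoid q) :: (rat \<Rightarrow>\<^sub>0 rat) set)"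
  using main_atomic[OF puiseux_props[OF assms(1)] assms(2)] .

end
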